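(* Let $\mathcal{A}$ be a pOC with state set $Q$ whose underlying chain $\mathcal{X}$ is strongly connected, with trend $t\ge0$. Assume $[p{\downarrow}]>0$ for all $p\in Q$. Let $v$ be a potential and $|v|=v_{\max}-v_{\min}$. Let $c^{(0)}\ge1$ and let $p^{(0)}\in Q$ satisfy $v_{p^{(0)}}=v_{\max}$. Let $b\in\mathbb{N}$. Then $$\mathcal{P}\bigl(\exists i: c^{(i)}\ge b\ \wedge\ \forall j\le i: c^{(j)}\ge1 \ \big|\ \mathrm{Run}(p^{(0)}(c^{(0)}))\bigr)\ \ge\ \frac{1}{b+1+|v|},$$ where $c^{(i)}$ denotes the counter value of the $i$-th configuration of a run.
   Context: A pOC is $\mathcal{A}=(Q,\delta^{=0},\delta^{>0},P^{=0},P^{>0})$ with the following components. - $\delta^{>0}\subseteq Q\times\{-1,0,1\}\times Q$ are the positive rules and $\delta^{=0}\subseteq Q\times\{0,1\}\times Q$ are the zero rules. Every state has both kinds of outgoing rule. - $P^{>0}$ and $P^{=0}$ are positive probability distributions over the outgoing rules of each state. $\mathcal{M}_\mathcal{A}$ is the Markov chain on configurations $p(i)$ with the following transitions: - $p(0)\to q(c)$ with probability $P^{=0}(p,c,q)$; - for $i\ge1$, $p(i)\to q(i+c)$ with probability $P^{>0}(p,c,q)$. $\mathrm{Run}(r(c))$ is the set of runs starting in $r(c)$. $[p{\downarrow}]$ is the probability that a run from $p(1)$ eventually reaches counter value $0$. $\mathcal{X}$ is the finite Markov chain on $Q$ with transition matrix $A_{pq}=\sum_cP^{>0}(p,c,q)$.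 With $\alpha$ its invariant distribution and $s_p=\sum_{(p,c,q)\in\delta^{>0}}P^{>0}(p,c,q)c$, the trend is $t=\alpha s$. A potential is $v\in\mathbb{R}^Q$ with $s+Av=v+\mathbf{1}t$. $v_{\max}$ and $v_{\min}$ are its largest and smallest components. *)

theory Defs
  imports Complex_Main
begin

text \<open>The rules are encoded by their
probabilities: Pz p c q = P^{=0}(p,c,q) and Pp p c q = P^{>0}(p,c,q); a triple is a
rule iff its probability is positive (so the distributions are positive on the rules).\<close>

definition pOC :: "('q::finite \<Rightarrow> int \<Rightarrow> 'q \<Rightarrow> real) \<Rightarrow> ('q \<Rightarrow> int \<Rightarrow> 'q \<Rightarrow> real) \<Rightarrow> bool" where
  "pOC Pz Pp \<longleftrightarrow>
     (\<forall>p c q. 0 \<le> Pz p c q \<and> 0 \<le> Pp p c q) \<and>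
     (\<forall>p c q. 0 < Pz p c q \<longrightarrow> c \<in> {0, 1}) \<and>
     (\<forall>p c q. 0 < Pp p c q \<longrightarrow> c \<in> {-1, 0, 1}) \<and>
     (\<forall>p. (\<Sum>q\<in>UNIV. \<Sum>c\<in>{0, 1}. Pz p c q) = 1) \<and>
     (\<forall>p. (\<Sum>q\<in>UNIV. \<Sum>c\<in>{-1, 0, 1}. Pp p c q) = 1)"

definition pOC_step :: "('q::finite \<Rightarrow> int \<Rightarrow> 'q \<Rightarrow> real) \<Rightarrow> ('q \<Rightarrow> int \<Rightarrow> 'q \<Rightarrow> real)
    \<Rightarrow> ('q \<times> nat \<Rightarrow> real) \<Rightarrow> 'q \<times> nat \<Rightarrow> real" where
  "pOC_step Pz Pp f x = (case x of (p, i) \<Rightarrow>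
     if i = 0 then (\<Sum>q\<in>UNIV. \<Sum>c\<in>{0, 1}. Pz p c q * f (q, nat c))
     else (\<Sum>q\<in>UNIV. \<Sum>c\<in>{-1, 0, 1}. Pp p c q * f (q, nat (int i + c))))"

fun until_n :: "('q::finite \<Rightarrow> int \<Rightarrow> 'q \<Rightarrow> real) \<Rightarrow> ('q \<Rightarrow> int \<Rightarrow> 'q \<Rightarrow> real)
    \<Rightarrow> ('q \<times> nat) set \<Rightarrow> ('q \<times> nat) set \<Rightarrow> nat \<Rightarrow> 'q \<times> nat \<Rightarrow> real" where
  "until_n Pz Pp S T 0 x = (if x \<in> T then 1 else 0)"
| "until_n Pz Pp S T (Suc n) x =
     (if x \<in> T then 1 else if x \<in> S then pOC_step Pz Pp (until_n Pz Pp S T n) x else 0)"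

text \<open>Probability of the event: exists i with x_i in T and x_j in S for all j < i.\<close>
definition until_prob :: "('q::finite \<Rightarrow> int \<Rightarrow> 'q \<Rightarrow> real) \<Rightarrow> ('q \<Rightarrow> int \<Rightarrow> 'q \<Rightarrow> real)
    \<Rightarrow> ('q \<times> nat) set \<Rightarrow> ('q \<times> nat) set \<Rightarrow> 'q \<times> nat \<Rightarrow> real" where
  "until_prob Pz Pp S T x = (SUP n. until_n Pz Pp S T n x)"

definition term_prob :: "('q::finite \<Rightarrow> int \<Rightarrow> 'q \<Rightarrow> real) \<Rightarrow> ('q \<Rightarrow> int \<Rightarrow> 'q \<Rightarrow> real) \<Rightarrow> 'q \<Rightarrow> real" where
  "term_prob Pz Pp p = until_prob Pz Pp UNIV {x. snd x = 0} (p, 1)"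

definition chainA :: "('q::finite \<Rightarrow> int \<Rightarrow> 'q \<Rightarrow> real) \<Rightarrow> 'q \<Rightarrow> 'q \<Rightarrow> real" where
  "chainA Pp p q = (\<Sum>c\<in>{-1, 0, 1}. Pp p c q)"

definition strongly_connected :: "('q::finite \<Rightarrow> 'q \<Rightarrow> real) \<Rightarrow> bool" where
  "strongly_connected A \<longleftrightarrow> (\<forall>p q. (p, q) \<in> {(x, y). 0 < A x y}\<^sup>*)"

definition invariant_dist :: "('q::finite \<Rightarrow> 'q \<Rightarrow> real) \<Rightarrow> ('q \<Rightarrow> real) \<Rightarrow> bool" where
  "invariant_dist A \<alpha> \<longleftrightarrow> (\<forall>p. 0 \<le> \<alpha> p) \<and> (\<Sum>p\<in>UNIV. \<alpha> p) = 1 \<and>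
     (\<forall>q. (\<Sum>p\<in>UNIV. \<alpha> p * A p q) = \<alpha> q)"

definition drift :: "('q::finite \<Rightarrow> int \<Rightarrow> 'q \<Rightarrow> real) \<Rightarrow> 'q \<Rightarrow> real" where
  "drift Pp p = (\<Sum>q\<in>UNIV. \<Sum>c\<in>{-1, 0, 1}. Pp p c q * real_of_int c)"

text \<open>Trend t = alpha s, alpha the (for strongly connected X unique) invariant distribution.\<close>
definition trend :: "('q::finite \<Rightarrow> int \<Rightarrow> 'q \<Rightarrow> real) \<Rightarrow> real" where
  "trend Pp = (let \<alpha> = (SOME \<alpha>. invariant_dist (chainA Pp) \<alpha>) in
     (\<Sum>p\<in>UNIV. \<alpha> p * drift Pp p))"

definition potential :: "('q::finite \<Rightarrow> int \<Rightarrow> 'q \<Rightarrow> real) \<Rightarrow> ('q \<Rightarrow> real) \<Rightarrow> bool" where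
  "potential Pp v \<longleftrightarrow>
     (\<forall>p. drift Pp p + (\<Sum>q\<in>UNIV. chainA Pp p q * v q) = v p + trend Pp)"

end

theory Submission
  imports Defs
begin

lemma pOC_rows:
  assumes "pOC Pz Pp"
  shows "(\<Sum>q\<in>UNIV. \<Sum>c\<in>{0, 1}. Pz p c q) = 1" "(\<Sum>q\<in>UNIV. \<Sum>c\<in>{-1, 0, 1}. Pp p c q) = 1"
    "0 \<le> Pz p c q" "0 \<le> Pp p c q"
  using assms unfolding pOC_def by auto

lemma step_const:
  assumes "pOC Pz Pp"
  shows "pOC_step Pz Pp (\<lambda>_. a) x = a"
proof -
  obtain p i where x: "x = (p, i)" by (cases x)
  have 1: "(\<Sum>q\<in>UNIV. \<Sum>c\<in>{0, 1}. Pz p c q * a) = (\<Sum>q\<in>UNIV. \<Sum>c\<in>{0, 1}. Pz p c q) * a"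
    by (simp add: sum_distrib_right distrib_right)
  have 2: "(\<Sum>q\<in>UNIV. \<Sum>c\<in>{-1, 0, 1}. Pp p c q * a) = (\<Sum>q\<in>UNIV. \<Sum>c\<in>{-1, 0, 1}. Pp p c q) * a"
    by (simp add: sum_distrib_right distrib_right)
  show ?thesis unfolding x pOC_step_def using 1 2 pOC_rows[OF assms, of p] by simp
qed

lemma step_mono:
  assumes "pOC Pz Pp" "\<And>y. f y \<le> g y"
  shows "pOC_step Pz Pp f x \<le> pOC_step Pz Pp g x"
proof -
  obtain p i where x: "x = (p, i)" by (cases x)
  show ?thesis unfolding x pOC_step_def
    using pOC_rows[OF assms(1)] assms(2)
    by (auto intro!: sum_mono add_mono mult_left_mono)
qed

lemma step_nonneg:
  assumes "pOC Pz Pp" "\<And>y. 0 \<le> f y"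
  shows "0 \<le> pOC_step Pz Pp f x"
  using step_mono[OF assms(1), of "\<lambda>_. 0" f x] step_const[OF assms(1)] assms(2) by simp

lemma step_add:
  "pOC_step Pz Pp (\<lambda>y. f y + g y) x = pOC_step Pz Pp f x + pOC_step Pz Pp g x"
  unfolding pOC_step_def by (cases x) (simp add: sum.distrib distrib_left)

lemma step_scale:
  "pOC_step Pz Pp (\<lambda>y. a * f y) x = a * pOC_step Pz Pp f x"
  unfolding pOC_step_def by (cases x) (simp add: sum_distrib_left algebra_simps)

lemma until_bounds:
  assumes "pOC Pz Pp"
  shows "0 \<le> until_n Pz Pp S T n x \<and> until_n Pz Pp S T n x \<le> 1"
proof (induction n arbitrary: x)
  case 0 then show ?case by simp
next
  case (Suc n)
  have "pOC_step Pz Pp (\<lambda>_. 0) x \<le> pOC_step Pz Pp (until_n Pz Pp S T n) x"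
    by (rule step_mono[OF assms]) (use Suc in auto)
  moreover have "pOC_step Pz Pp (until_n Pz Pp S T n) x \<le> pOC_step Pz Pp (\<lambda>_. 1) x"
    by (rule step_mono[OF assms]) (use Suc in auto)
  ultimately show ?case using step_const[OF assms] by simp
qed

lemma until_Suc_ge:
  assumes "pOC Pz Pp"
  shows "until_n Pz Pp S T n x \<le> until_n Pz Pp S T (Suc n) x"
proof (induction n arbitrary: x)
  case 0
  then show ?case using until_bounds[OF assms, of S T 0]
    step_nonneg[OF assms, of "until_n Pz Pp S T 0" x] by simp
next
  case (Suc n)
  have "pOC_step Pz Pp (until_n Pz Pp S T n) x \<le> pOC_step Pz Pp (until_n Pz Pp S T (Suc n)) x"
    by (rule step_mono[OF assms]) (use Suc in auto)
  then show ?case by simp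
qed

lemma until_mono:
  assumes "pOC Pz Pp" "m \<le> n"
  shows "until_n Pz Pp S T m x \<le> until_n Pz Pp S T n x"
  using lift_Suc_mono_le[of "\<lambda>n. until_n Pz Pp S T n x", OF until_Suc_ge[OF assms(1)] assms(2)] .

lemma until_T_mono:
  assumes "pOC Pz Pp" "T \<subseteq> T'"
  shows "until_n Pz Pp S T n x \<le> until_n Pz Pp S T' n x"
proof (induction n arbitrary: x)
  case 0 then show ?case using assms by auto
next
  case (Suc n)
  have "pOC_step Pz Pp (until_n Pz Pp S T n) x \<le> pOC_step Pz Pp (until_n Pz Pp S T' n) x"
    by (rule step_mono[OF assms(1)]) (use Suc in auto)
  then show ?case using assms(2) until_bounds[OF assms(1), of S T "Suc n" x] by auto
qed

lemma until_comp:
  assumes "pOC Pz Pp" "0 \<le> a" "a \<le> 1" "\<forall>y\<in>T1. a \<le> until_n Pz Pp S T2 m y"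
  shows "a * until_n Pz Pp S T1 n x \<le> until_n Pz Pp S T2 (n + m) x"
proof (induction n arbitrary: x)
  case 0 then show ?case using assms until_bounds[OF assms(1), of S T2 m x] by auto
next
  case (Suc n)
  show ?case
  proof (cases "x \<in> T1")
    case True
    then show ?thesis using assms(4) until_mono[OF assms(1), of m "Suc n + m" S T2 x] by auto
  next
    case False
    have st: "pOC_step Pz Pp (\<lambda>y. a * until_n Pz Pp S T1 n y) x \<le> pOC_step Pz Pp (until_n Pz Pp S T2 (n + m)) x"
      by (rule step_mono[OF assms(1)]) (use Suc in auto)
    have b1: "until_n Pz Pp S T1 (Suc n) x \<le> 1" using until_bounds[OF assms(1)] by blast
    have b0: "0 \<le> until_n Pz Pp S T2 (n + m) x" using until_bounds[OF assms(1)] by blast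
    have b2: "0 \<le> pOC_step Pz Pp (until_n Pz Pp S T2 (n + m)) x"
      using step_mono[OF assms(1), of "\<lambda>_. 0" "until_n Pz Pp S T2 (n + m)" x]
        step_const[OF assms(1)] until_bounds[OF assms(1)] by simp
    have "a * until_n Pz Pp S T1 (Suc n) x \<le> a" using b1 assms(2) by (simp add: mult_left_le)
    then show ?thesis using False st step_scale[of Pz Pp a] assms(3) b2
      by (auto simp del: until_n.simps(2)) (auto simp: step_scale)
  qed
qed

fun stay :: "('q::finite \<Rightarrow> int \<Rightarrow> 'q \<Rightarrow> real) \<Rightarrow> ('q \<Rightarrow> int \<Rightarrow> 'q \<Rightarrow> real)
    \<Rightarrow> ('q \<times> nat) set \<Rightarrow> ('q \<times> nat) set \<Rightarrow> nat \<Rightarrow> 'q \<times> nat \<Rightarrow> real" where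
  "stay Pz Pp S T 0 x = (if x \<in> S \<and> x \<notin> T then 1 else 0)"
| "stay Pz Pp S T (Suc n) x =
     (if x \<in> S \<and> x \<notin> T then pOC_step Pz Pp (stay Pz Pp S T n) x else 0)"

lemma stay_exit:
  assumes "pOC Pz Pp"
  shows "stay Pz Pp S T n x + until_n Pz Pp UNIV {x. \<not> (x \<in> S \<and> x \<notin> T)} n x = 1"
proof (induction n arbitrary: x)
  case 0 then show ?case by simp
next
  case (Suc n)
  have e: "(\<lambda>y. stay Pz Pp S T n y + until_n Pz Pp UNIV {x. \<not> (x \<in> S \<and> x \<notin> T)} n y) = (\<lambda>_. 1)"
    using Suc by auto
  show ?case
    using step_add[of Pz Pp "stay Pz Pp S T n" "until_n Pz Pp UNIV {x. \<not> (x \<in> S \<and> x \<notin> T)} n" x]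
    unfolding e step_const[OF assms] by auto
qed

lemma stay_bounds:
  assumes "pOC Pz Pp"
  shows "0 \<le> stay Pz Pp S T n x \<and> stay Pz Pp S T n x \<le> 1"
  using stay_exit[OF assms, of S T n x]
    until_bounds[OF assms, of UNIV "{x. \<not> (x \<in> S \<and> x \<notin> T)}" n x] by linarith

lemma stay_shift:
  assumes "pOC Pz Pp" "0 \<le> a" "\<forall>y. stay Pz Pp S T n y \<le> a"
  shows "stay Pz Pp S T (Suc m + n) x \<le> a * stay Pz Pp S T m x"
proof (induction m arbitrary: x)
  case 0
  have "pOC_step Pz Pp (stay Pz Pp S T n) x \<le> pOC_step Pz Pp (\<lambda>_. a) x"
    by (rule step_mono[OF assms(1)]) (use assms(3) in auto)
  then show ?case using step_const[OF assms(1)] assms(2) by auto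
next
  case (Suc m)
  have "pOC_step Pz Pp (stay Pz Pp S T (Suc m + n)) x \<le> pOC_step Pz Pp (\<lambda>y. a * stay Pz Pp S T m y) x"
    by (rule step_mono[OF assms(1)]) (use Suc in auto)
  then show ?case by (simp add: step_scale)
qed

lemma stay_iter:
  assumes "pOC Pz Pp" "0 \<le> q" "\<forall>y. stay Pz Pp S T L y \<le> q"
  shows "stay Pz Pp S T (k * Suc L) x \<le> q ^ k"
proof (induction k arbitrary: x)
  case 0 then show ?case using stay_bounds[OF assms(1), of S T 0 x] by simp
next
  case (Suc k)
  have "stay Pz Pp S T (Suc L + k * Suc L) x \<le> q ^ k * stay Pz Pp S T L x"
    by (rule stay_shift[OF assms(1)]) (use Suc assms(2) in auto)
  also have "\<dots> \<le> q ^ k * q"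
  proof -
    have "stay Pz Pp S T L x \<le> q" using assms(3) by blast
    then show ?thesis by (rule mult_left_mono) (use assms(2) in simp)
  qed
  finally show ?case by (simp add: add.commute mult.commute)
qed

lemma step_shift:
  assumes "1 \<le> j" "\<forall>q m. f (q, m + k) = g (q, m)"
  shows "pOC_step Pz Pp f (p, j + k) = pOC_step Pz Pp g (p, j)"
proof -
  have a: "f (q, nat (int (j + k) + c)) = g (q, nat (int j + c))" if "c \<in> {-1, 0, 1}" for q c
  proof -
    have "nat (int (j + k) + c) = nat (int j + c) + k" using assms(1) that by auto
    then show ?thesis using assms(2) by simp
  qed
  have "(\<Sum>c\<in>{-1, 0, 1}. Pp p c q * f (q, nat (int (j + k) + c))) = (\<Sum>c\<in>{-1, 0, 1}. Pp p c q * g (q, nat (int j + c)))" for q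
    by (rule sum.cong) (simp_all only: a)
  then show ?thesis using assms(1) unfolding pOC_step_def by simp
qed

lemma until_shift:
  "until_n Pz Pp UNIV {x. snd x = k} n (p, j + k) = until_n Pz Pp UNIV {x. snd x = 0} n (p, j)"
proof (induction n arbitrary: p j)
  case 0 then show ?case by simp
next
  case (Suc n)
  show ?case
  proof (cases "j = 0")
    case True then show ?thesis by simp
  next
    case False
    have "pOC_step Pz Pp (until_n Pz Pp UNIV {x. snd x = k} n) (p, j + k)
        = pOC_step Pz Pp (until_n Pz Pp UNIV {x. snd x = 0} n) (p, j)"
      by (rule step_shift) (use False Suc in auto)
    then show ?thesis using False by simp
  qed
qed

lemma step_h:
  assumes "pOC Pz Pp" "potential Pp v" "0 \<le> trend Pp" "1 \<le> i" "i < b" "0 < D"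
  shows "(real i + v p - M) / D \<le> pOC_step Pz Pp (\<lambda>x. (real (min (snd x) b) + v (fst x) - M) / D) (p, i)"
proof -
  have e: "pOC_step Pz Pp (\<lambda>x. (real (min (snd x) b) + v (fst x) - M) / D) (p, i) =
    (\<Sum>q\<in>UNIV. ((real i - M) * (Pp p (-1) q + (Pp p 0 q + Pp p 1 q)) + (Pp p 1 q - Pp p (-1) q)
       + (Pp p (-1) q + (Pp p 0 q + Pp p 1 q)) * v q) / D)"
    unfolding pOC_step_def using assms(4,5,6)
    by (auto intro!: sum.cong simp: field_simps of_nat_diff min_def nat_diff_distrib')
  have r: "(\<Sum>q\<in>UNIV. Pp p (-1) q + (Pp p 0 q + Pp p 1 q)) = 1" using pOC_rows(2)[OF assms(1), of p] by simp
  have d: "drift Pp p = (\<Sum>q\<in>UNIV. Pp p 1 q - Pp p (-1) q)" unfolding drift_def by simp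
  have c: "(\<Sum>q\<in>UNIV. chainA Pp p q * v q) = (\<Sum>q\<in>UNIV. (Pp p (-1) q + (Pp p 0 q + Pp p 1 q)) * v q)"
    unfolding chainA_def by simp
  have pot: "drift Pp p + (\<Sum>q\<in>UNIV. chainA Pp p q * v q) = v p + trend Pp"
    using assms(2) unfolding potential_def by blast
  have "pOC_step Pz Pp (\<lambda>x. (real (min (snd x) b) + v (fst x) - M) / D) (p, i)
     = ((real i - M) * (\<Sum>q\<in>UNIV. Pp p (-1) q + (Pp p 0 q + Pp p 1 q)) + drift Pp p
        + (\<Sum>q\<in>UNIV. chainA Pp p q * v q)) / D"
    unfolding e d c by (simp only: sum.distrib flip: sum_divide_distrib sum_distrib_left)
  also have "\<dots> = (real i - M + v p + trend Pp) / D" using r pot by simp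
  finally show ?thesis using assms(3,6) by (simp add: divide_right_mono)
qed

lemma h_claim:
  assumes "pOC Pz Pp" "potential Pp v" "0 \<le> trend Pp" "\<forall>q. v q \<le> M" "real b + 1 \<le> D"
  shows "(real (min (snd x) b) + v (fst x) - M) / D \<le>
     until_n Pz Pp {x. 1 \<le> snd x} {x. b \<le> snd x \<and> 1 \<le> snd x} n x
     + stay Pz Pp {x. 1 \<le> snd x} {x. b \<le> snd x \<and> 1 \<le> snd x} n x"
proof (induction n arbitrary: x)
  let ?S = "{x. 1 \<le> snd x}" and ?T = "{x. b \<le> snd x \<and> 1 \<le> snd x}"
  let ?h = "\<lambda>x. (real (min (snd x) b) + v (fst x) - M) / D"
  have D: "0 < D" using assms(5) by linarith
  have hle: "?h x \<le> 1" for x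
  proof -
    have "v (fst x) \<le> M" using assms(4) by blast
    moreover have "real (min (snd x) b) \<le> real b" by simp
    ultimately have "real (min (snd x) b) + v (fst x) - M \<le> real b" by linarith
    also have "\<dots> \<le> D" using assms(5) by simp
    finally show ?thesis using D by simp
  qed
  have h0: "?h x \<le> 0" if "snd x = 0" for x
  proof -
    have "v (fst x) \<le> M" using assms(4) by blast
    then show ?thesis using that D by (simp add: divide_nonpos_pos)
  qed
  {
    case 0
    show ?case
    proof (cases "snd x = 0")
      case True then show ?thesis using h0[of x] by simp
    next
      case False then show ?thesis using hle[of x] by auto
    qed
  next
    case (Suc n)
    obtain p j where x: "x = (p, j)" by (cases x)
    show ?case
    proof (cases "j = 0")
      case True then show ?thesis using h0[of x] x by simp
    next
      case j: False
      show ?thesis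
      proof (cases "b \<le> j")
        case True
        then have "until_n Pz Pp ?S ?T (Suc n) x = 1" using x j by simp
        then show ?thesis using hle[of x] stay_bounds[OF assms(1), of ?S ?T "Suc n" x] by linarith
      next
        case False
        have "?h x = (real j + v p - M) / D" using x False by simp
        also have "\<dots> \<le> pOC_step Pz Pp ?h (p, j)"
          by (rule step_h[OF assms(1-3)]) (use j False D in auto)
        also have "\<dots> \<le> pOC_step Pz Pp (\<lambda>y. until_n Pz Pp ?S ?T n y + stay Pz Pp ?S ?T n y) (p, j)"
          by (rule step_mono[OF assms(1)]) (use Suc in blast)
        also have "\<dots> = until_n Pz Pp ?S ?T (Suc n) x + stay Pz Pp ?S ?T (Suc n) x"
          using x j False by (simp add: step_add)
        finally show ?thesis .
      qed
    qed
  }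
qed

lemma stay_out: "\<not> (x \<in> S \<and> x \<notin> T) \<Longrightarrow> stay Pz Pp S T n x = 0"
  by (cases n) auto

lemma decay:
  assumes "pOC Pz Pp" "\<forall>p. term_prob Pz Pp p > 0"
  shows "\<exists>L \<delta>. 0 < \<delta> \<and> \<delta> \<le> 1 \<and>
    (\<forall>y. stay Pz Pp {x. 1 \<le> snd x} {x. b \<le> snd x \<and> 1 \<le> snd x} L y \<le> 1 - \<delta>)"
proof -
  let ?S = "{x. 1 \<le> snd x}" and ?T = "{x. b \<le> snd x \<and> 1 \<le> snd x}"
  let ?Z = "{x::'a \<times> nat. snd x = 0}"
  let ?z = "\<lambda>n x. until_n Pz Pp UNIV ?Z n x"
  have ex: "\<exists>n. 0 < ?z n (p, 1)" for p
  proof (rule ccontr)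
    assume "\<not> ?thesis"
    then have "\<forall>n. ?z n (p, 1) \<le> 0" by (simp add: not_less)
    then have "term_prob Pz Pp p \<le> 0" unfolding term_prob_def until_prob_def
      by (intro cSUP_least) auto
    moreover have "0 < term_prob Pz Pp p" using assms(2) by blast
    ultimately show False by linarith
  qed
  then obtain nf where nf: "\<forall>p. 0 < ?z (nf p) (p, 1)" by metis
  define N where "N = Max (range nf)"
  define d1 where "d1 = Min (range (\<lambda>p. ?z N (p, 1)))"
  have zN: "0 < ?z N (p, 1)" for p
  proof -
    have "nf p \<le> N" unfolding N_def by simp
    then have "?z (nf p) (p, 1) \<le> ?z N (p, 1)" by (rule until_mono[OF assms(1)])
    moreover have "0 < ?z (nf p) (p, 1)" using nf by blast
    ultimately show ?thesis by linarith
  qed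
  have d1le: "d1 \<le> ?z N (p, 1)" for p unfolding d1_def by simp
  have d1pos: "0 < d1"
  proof -
    have "d1 \<in> range (\<lambda>p. ?z N (p, 1))" unfolding d1_def by (rule Min_in) auto
    then show ?thesis using zN by auto
  qed
  have d1one: "d1 \<le> 1" using d1le[of undefined] until_bounds[OF assms(1), of UNIV ?Z N "(undefined, 1)"]
    by linarith
  have zc: "d1 ^ c \<le> ?z (c * N) (p, c)" for c p
  proof (induction c arbitrary: p)
    case 0 then show ?case by simp
  next
    case (Suc c)
    have "d1 ^ c * until_n Pz Pp UNIV {x. snd x = c} N (p, 1 + c) \<le> ?z (N + c * N) (p, 1 + c)"
    proof (rule until_comp[OF assms(1)])
      show "0 \<le> d1 ^ c" using d1pos by simp
      show "d1 ^ c \<le> 1" using d1pos d1one by (simp add: power_le_one)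
      show "\<forall>y\<in>{x. snd x = c}. d1 ^ c \<le> ?z (c * N) y"
      proof
        fix y :: "'a \<times> nat" assume "y \<in> {x. snd x = c}"
        then obtain q where "y = (q, c)" by (cases y) simp
        then show "d1 ^ c \<le> ?z (c * N) y" using Suc.IH[of q] by simp
      qed
    qed
    moreover have "until_n Pz Pp UNIV {x. snd x = c} N (p, 1 + c) = ?z N (p, 1)"
      by (rule until_shift)
    moreover have "d1 ^ Suc c \<le> d1 ^ c * ?z N (p, 1)"
      using d1le[of p] d1pos by (simp add: mult_left_mono)
    ultimately show ?case by simp
  qed
  have "stay Pz Pp ?S ?T (b * N) y \<le> 1 - d1 ^ b" for y
  proof (cases "y \<in> ?S \<and> y \<notin> ?T")
    case False then show ?thesis using stay_out[OF False] d1pos d1one by (simp add: power_le_one)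
  next
    case True
    obtain p j where y: "y = (p, j)" by (cases y)
    have jb: "j \<le> b" using True y by auto
    have "d1 ^ b \<le> d1 ^ j" using jb d1pos d1one by (simp add: power_decreasing)
    also have "\<dots> \<le> ?z (j * N) y" using zc y by simp
    also have "\<dots> \<le> until_n Pz Pp UNIV {x. \<not> (x \<in> ?S \<and> x \<notin> ?T)} (j * N) y"
      by (rule until_T_mono[OF assms(1)]) auto
    also have "\<dots> \<le> until_n Pz Pp UNIV {x. \<not> (x \<in> ?S \<and> x \<notin> ?T)} (b * N) y"
      by (rule until_mono[OF assms(1)]) (use jb in simp)
    finally show ?thesis using stay_exit[OF assms(1), of ?S ?T "b * N" y] by linarith
  qed
  then show ?thesis using d1pos d1one by (intro exI[of _ "b * N"] exI[of _ "d1 ^ b"]) (simp add: power_le_one)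
qed

lemma until_le_prob:
  assumes "pOC Pz Pp"
  shows "until_n Pz Pp S T n x \<le> until_prob Pz Pp S T x"
  unfolding until_prob_def
proof (rule cSUP_upper)
  show "bdd_above (range (\<lambda>n. until_n Pz Pp S T n x))"
    using until_bounds[OF assms] by (intro bdd_aboveI[of _ 1]) blast
qed simp

theorem mainTheorem14:
  fixes Pz Pp :: "'q::finite \<Rightarrow> int \<Rightarrow> 'q \<Rightarrow> real"
    and v :: "'q \<Rightarrow> real" and p0 :: 'q and c0 b :: nat
  assumes "pOC Pz Pp"
    and "strongly_connected (chainA Pp)"
    and "trend Pp \<ge> 0"
    and "\<forall>p. term_prob Pz Pp p > 0"
    and "potential Pp v"
    and "c0 \<ge> 1"
    and "v p0 = Max (range v)"
  shows "until_prob Pz Pp {x. snd x \<ge> 1} {x. snd x \<ge> b \<and> snd x \<ge> 1} (p0, c0)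
           \<ge> 1 / (real b + 1 + (Max (range v) - Min (range v)))"
proof -
  let ?S = "{x::'q \<times> nat. 1 \<le> snd x}" and ?T = "{x::'q \<times> nat. b \<le> snd x \<and> 1 \<le> snd x}"
  define M where "M = Max (range v)"
  define m where "m = Min (range v)"
  define D where "D = real b + 1 + (M - m)"
  have vM: "\<forall>q. v q \<le> M" unfolding M_def by simp
  have vm: "m \<le> v p0" unfolding m_def by simp
  have "v p0 \<le> M" using vM by blast
  then have Dge: "real b + 1 \<le> D" unfolding D_def using vm by linarith
  have Dpos: "0 < D" using Dge by linarith
  have goal: "1 / D \<le> until_prob Pz Pp ?S ?T (p0, c0)"
  proof (cases "b \<le> c0")
    case True
    have "until_n Pz Pp ?S ?T 0 (p0, c0) = 1" using True assms(6) by simp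
    moreover have "1 / D \<le> 1" using Dge by simp
    ultimately show ?thesis using until_le_prob[OF assms(1), of ?S ?T 0 "(p0, c0)"] by linarith
  next
    case False
    obtain L \<delta> where Ld: "0 < \<delta>" "\<delta> \<le> 1" "\<forall>y. stay Pz Pp ?S ?T L y \<le> 1 - \<delta>"
      using decay[OF assms(1,4), of b] by blast
    have h0: "1 / D \<le> (real (min c0 b) + v p0 - M) / D"
      using False assms(6,7) Dpos unfolding M_def by (simp add: divide_right_mono)
    have bnd: "1 / D \<le> until_prob Pz Pp ?S ?T (p0, c0) + (1 - \<delta>) ^ k" for k
    proof -
      have "(real (min c0 b) + v p0 - M) / D \<le> until_n Pz Pp ?S ?T (k * Suc L) (p0, c0) + stay Pz Pp ?S ?T (k * Suc L) (p0, c0)"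
        using h_claim[OF assms(1,5,3) vM Dge, of "(p0, c0)" "k * Suc L"] by simp
      moreover have "stay Pz Pp ?S ?T (k * Suc L) (p0, c0) \<le> (1 - \<delta>) ^ k"
        by (rule stay_iter[OF assms(1)]) (use Ld in auto)
      ultimately show ?thesis using h0 until_le_prob[OF assms(1), of ?S ?T "k * Suc L" "(p0, c0)"] by linarith
    qed
    show ?thesis
    proof (rule ccontr)
      assume "\<not> ?thesis"
      then have "0 < 1 / D - until_prob Pz Pp ?S ?T (p0, c0)" by linarith
      moreover have "1 - \<delta> < 1" using Ld(1) by simp
      ultimately obtain k where "(1 - \<delta>) ^ k < 1 / D - until_prob Pz Pp ?S ?T (p0, c0)"
        using real_arch_pow_inv by blast
      then show False using bnd[of k] by linarith
    qed
  qed
  then show ?thesis unfolding D_def M_def m_def by simp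
qed

end
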